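(* Let $I,J\subseteq\mathbb{R}$ be finite nonempty subsets and let $a=(a_i: i\in I)$ and $b=(b_j: j\in J)$ be two sequences of non-negative real numbers. For each $t\in I+J$, let $u_t(a,b)=\max\{a_i+b_{t-i}: i\in I,\ t-i\in J\}$. Then $$\frac{1}{|I|+|J|-1}\sum_{t\in I+J}u_t(a,b)\ \ge\ \frac{1}{|I|}\sum_{i\in I}a_i+\frac{1}{|J|}\sum_{j\in J}b_j.$$ Moreover, if $\min(|I|,|J|)\ge 2$ and $a_i>0$, $b_j>0$ for all $i\in I$, $j\in J$, then equality holds if and only if $I$ and $J$ are arithmetic progressions with a common difference and the sequences $a$ and $b$ (indexed in increasing order of $I$ and $J$) are arithmetic progressions with a common difference.
   Context: $I+J=\{i+j: i\in I, j\in J\}$. *)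

theory Defs
  imports Main "HOL.Real"
begin

definition sumset :: "real set \<Rightarrow> real set \<Rightarrow> real set" where
  "sumset I J = {i + j | i j. i \<in> I \<and> j \<in> J}"

definition u_max :: "real set \<Rightarrow> real set \<Rightarrow> (real \<Rightarrow> real) \<Rightarrow> (real \<Rightarrow> real) \<Rightarrow> real \<Rightarrow> real" where
  "u_max I J a b t = Max {a i + b (t - i) | i. i \<in> I \<and> t - i \<in> J}"

end

theory Submission
  imports Defs
begin


lemma umax_set_eq: "{a i + b (t - i) | i. i \<in> I \<and> t - i \<in> J} = (\<lambda>i. a i + b (t - i)) ` {i\<in>I. t - i \<in> J}"
  by auto

lemma umax_ge:
  assumes "finite I" "i \<in> I" "j \<in> J"
  shows "a i + b j \<le> u_max I J a b (i + j)"
  unfolding u_max_def umax_set_eq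
  by (rule Max_ge) (use assms in \<open>auto intro!: rev_image_eqI[where x=i]\<close>)

lemma umax_obtain:
  assumes "finite I" "t \<in> sumset I J"
  shows "\<exists>i\<in>I. t - i \<in> J \<and> u_max I J a b t = a i + b (t - i)"
proof -
  have ne: "{i\<in>I. t - i \<in> J} \<noteq> {}" using assms(2) by (auto simp: sumset_def)
  have "u_max I J a b t \<in> (\<lambda>i. a i + b (t - i)) ` {i\<in>I. t - i \<in> J}"
    unfolding u_max_def umax_set_eq by (rule Max_in) (use assms(1) ne in auto)
  then show ?thesis by auto
qed

lemma umax_nonneg:
  assumes "finite I" "t \<in> sumset I J" "\<forall>i\<in>I. a i \<ge> 0" "\<forall>j\<in>J. b j \<ge> 0"
  shows "u_max I J a b t \<ge> 0"
  using umax_obtain[OF assms(1,2), of a b] assms(3,4) by fastforce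

lemma umax_pos:
  assumes "finite I" "t \<in> sumset I J" "\<forall>i\<in>I. a i > 0" "\<forall>j\<in>J. b j > 0"
  shows "u_max I J a b t > 0"
  using umax_obtain[OF assms(1,2), of a b] assms(3,4) by fastforce

lemma umax_mono:
  assumes "finite I" "J' \<subseteq> J" "t \<in> sumset I J'"
  shows "u_max I J' a b t \<le> u_max I J a b t"
proof -
  have ne: "{i\<in>I. t - i \<in> J'} \<noteq> {}" using assms(3) by (auto simp: sumset_def)
  show ?thesis unfolding u_max_def umax_set_eq
    by (rule Max_mono) (use assms ne in auto)
qed

lemma sumset_swap: "sumset I J = sumset J I"
  unfolding sumset_def by (auto; metis add.commute)

lemma umax_swap: "u_max I J a b t = u_max J I b a t"
proof -
  have "{a i + b (t - i) | i. i \<in> I \<and> t - i \<in> J} = {b j + a (t - j) | j. j \<in> J \<and> t - j \<in> I}"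
  proof (intro set_eqI iffI)
    fix z assume "z \<in> {a i + b (t - i) | i. i \<in> I \<and> t - i \<in> J}"
    then obtain i where "i \<in> I" "t - i \<in> J" "z = a i + b (t - i)" by auto
    then show "z \<in> {b j + a (t - j) | j. j \<in> J \<and> t - j \<in> I}"
      by (intro CollectI exI[of _ "t - i"]) auto
  next
    fix z assume "z \<in> {b j + a (t - j) | j. j \<in> J \<and> t - j \<in> I}"
    then obtain j where "j \<in> J" "t - j \<in> I" "z = b j + a (t - j)" by auto
    then show "z \<in> {a i + b (t - i) | i. i \<in> I \<and> t - i \<in> J}"
      by (intro CollectI exI[of _ "t - j"]) auto
  qed
  then show ?thesis unfolding u_max_def by simp
qed

lemma finite_sumset: "finite I \<Longrightarrow> finite J \<Longrightarrow> finite (sumset I J)"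
proof -
  assume "finite I" "finite J"
  have "sumset I J = (\<lambda>(i,j). i + j) ` (I \<times> J)" unfolding sumset_def by auto
  then show ?thesis using \<open>finite I\<close> \<open>finite J\<close> by simp
qed

lemma arith_id:
  fixes m n A B p q :: real
  assumes "m > 1" "n > 1"
  shows "(n - 1) * (p + q + (m + (n - 1) - 1) * (A / m + (B - q) / (n - 1)) - (m + n - 1) * (A / m + B / n))
       + (m - 1) * (p + q + ((m - 1) + n - 1) * ((A - p) / (m - 1) + B / n) - (m + n - 1) * (A / m + B / n)) = 0"
  using assms by (simp add: field_simps)



lemma stepJ:
  fixes I J :: "real set" and a b :: "real \<Rightarrow> real"
  assumes fI: "finite I" and nI: "I \<noteq> {}" and fJ: "finite J" and cJ: "card J \<ge> 2"
    and a0: "\<forall>i\<in>I. a i \<ge> 0" and b0: "\<forall>j\<in>J. b j \<ge> 0"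
  shows "sum (u_max I J a b) (sumset I J) \<ge> a (Min I) + b (Min J) + sum (u_max I (J - {Min J}) a b) (sumset I (J - {Min J}))"
   and "(\<forall>i\<in>I. a i > 0) \<Longrightarrow> (\<forall>j\<in>J. b j > 0) \<Longrightarrow>
        sum (u_max I J a b) (sumset I J) \<le> a (Min I) + b (Min J) + sum (u_max I (J - {Min J}) a b) (sumset I (J - {Min J})) \<Longrightarrow>
        sumset I J = insert (Min I + Min J) (sumset I (J - {Min J})) \<and> Min I + Min J \<notin> sumset I (J - {Min J}) \<and>
        (\<forall>t\<in>sumset I (J - {Min J}). u_max I J a b t = u_max I (J - {Min J}) a b t) \<and>
        u_max I J a b (Min I + Min J) = a (Min I) + b (Min J)"
proof -
  define x where "x = Min I"
  define y where "y = Min J"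
  define J' where "J' = J - {y}"
  define S where "S = sumset I J"
  define S' where "S' = sumset I J'"
  define u where "u = u_max I J a b"
  define u' where "u' = u_max I J' a b"
  have nJ: "J \<noteq> {}" using cJ by auto
  have xI: "x \<in> I" using fI nI by (simp add: x_def)
  have yJ: "y \<in> J" using fJ nJ by (simp add: y_def)
  have xle: "\<And>i. i \<in> I \<Longrightarrow> x \<le> i" using fI by (simp add: x_def)
  have ylt: "\<And>j. j \<in> J' \<Longrightarrow> y < j" using fJ by (auto simp: y_def J'_def order_le_neq_trans)
  have J'J: "J' \<subseteq> J" by (auto simp: J'_def)
  have fS: "finite S" using fI fJ by (simp add: S_def finite_sumset)
  have S'S: "S' \<subseteq> S" using J'J by (auto simp: S_def S'_def sumset_def)
  have xyS: "x + y \<in> S" using xI yJ by (auto simp: S_def sumset_def)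
  have xyS': "x + y \<notin> S'"
  proof
    assume "x + y \<in> S'"
    then obtain i j where "i \<in> I" "j \<in> J'" "x + y = i + j" by (auto simp: S'_def sumset_def)
    with xle[of i] ylt[of j] show False by linarith
  qed
  have uge0: "\<And>t. t \<in> S \<Longrightarrow> u t \<ge> 0" using umax_nonneg[OF fI _ a0 b0] by (simp add: u_def S_def)
  have split1: "sum u S = sum u S' + sum u (S - S')"
    using sum.subset_diff[OF S'S fS, of u] by simp
  have split2: "sum u (S - S') = u (x + y) + sum u (S - S' - {x + y})"
    using fS xyS xyS' by (simp add: sum.remove)
  have r0: "sum u (S - S' - {x + y}) \<ge> 0" by (rule sum_nonneg) (use uge0 in auto)
  have uxy: "u (x + y) \<ge> a x + b y" using umax_ge[OF fI xI yJ] by (simp add: u_def)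
  have mono: "\<And>t. t \<in> S' \<Longrightarrow> u' t \<le> u t" using umax_mono[OF fI J'J] by (simp add: u_def u'_def S'_def)
  have s'mono: "sum u' S' \<le> sum u S'" by (rule sum_mono) (rule mono)
  show "sum (u_max I J a b) (sumset I J) \<ge> a (Min I) + b (Min J) + sum (u_max I (J - {Min J}) a b) (sumset I (J - {Min J}))"
    using split1 split2 r0 uxy s'mono by (simp add: u_def u'_def S_def S'_def J'_def x_def y_def)
  assume apos: "\<forall>i\<in>I. a i > 0" and bpos: "\<forall>j\<in>J. b j > 0"
  assume le: "sum (u_max I J a b) (sumset I J) \<le> a (Min I) + b (Min J) + sum (u_max I (J - {Min J}) a b) (sumset I (J - {Min J}))"
  then have le': "sum u S \<le> a x + b y + sum u' S'" by (simp add: u_def u'_def S_def S'_def J'_def x_def y_def)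
  have e1: "sum u S' = sum u' S'" using le' split1 split2 r0 uxy s'mono by linarith
  have e2: "u (x + y) = a x + b y" using le' split1 split2 r0 uxy s'mono by linarith
  have e3: "sum u (S - S' - {x + y}) = 0" using le' split1 split2 r0 uxy s'mono by linarith
  have empty: "S - S' - {x + y} = {}"
  proof (rule ccontr)
    assume "S - S' - {x + y} \<noteq> {}"
    moreover have "\<And>t. t \<in> S - S' - {x + y} \<Longrightarrow> u t > 0" using umax_pos[OF fI _ apos bpos] by (simp add: u_def S_def)
    ultimately have "sum u (S - S' - {x + y}) > 0" using fS by (intro sum_pos) auto
    with e3 show False by simp
  qed
  have Seq: "S = insert (x + y) S'" using empty S'S xyS by auto
  have "sum (\<lambda>t. u t - u' t) S' = 0" using e1 by (simp add: sum_subtractf)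
  then have "\<forall>t\<in>S'. u t - u' t = 0"
    using sum_nonneg_eq_0_iff[of S' "\<lambda>t. u t - u' t"] fS S'S mono finite_subset by fastforce
  then show "sumset I J = insert (Min I + Min J) (sumset I (J - {Min J})) \<and> Min I + Min J \<notin> sumset I (J - {Min J}) \<and>
        (\<forall>t\<in>sumset I (J - {Min J}). u_max I J a b t = u_max I (J - {Min J}) a b t) \<and>
        u_max I J a b (Min I + Min J) = a (Min I) + b (Min J)"
    using Seq xyS' e2 by (simp add: u_def u'_def S_def S'_def J'_def x_def y_def)
qed



definition consec :: "real set \<Rightarrow> real \<Rightarrow> real \<Rightarrow> bool" where
  "consec I i i' \<longleftrightarrow> i \<in> I \<and> i' \<in> I \<and> i < i' \<and> (\<forall>z\<in>I. \<not> (i < z \<and> z < i'))"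

definition Qp :: "real set \<Rightarrow> real set \<Rightarrow> (real \<Rightarrow> real) \<Rightarrow> (real \<Rightarrow> real) \<Rightarrow> bool" where
  "Qp I J a b \<longleftrightarrow> (\<forall>i i' j j'. consec I i i' \<longrightarrow> consec J j j' \<longrightarrow> i' - i = j' - j \<and> a i' - a i = b j' - b j)"

definition tgt :: "real set \<Rightarrow> real set \<Rightarrow> (real \<Rightarrow> real) \<Rightarrow> (real \<Rightarrow> real) \<Rightarrow> real" where
  "tgt I J a b = (real (card I) + real (card J) - 1) * (sum a I / real (card I) + sum b J / real (card J))"

definition Pp :: "real set \<Rightarrow> real set \<Rightarrow> (real \<Rightarrow> real) \<Rightarrow> (real \<Rightarrow> real) \<Rightarrow> bool" where
  "Pp I J a b \<longleftrightarrow> sum (u_max I J a b) (sumset I J) \<ge> tgt I J a b \<and>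
     ((\<forall>i\<in>I. a i > 0) \<longrightarrow> (\<forall>j\<in>J. b j > 0) \<longrightarrow> sum (u_max I J a b) (sumset I J) = tgt I J a b \<longrightarrow>
       (\<forall>i\<in>I. \<forall>j\<in>J. u_max I J a b (i + j) = a i + b j) \<and> Qp I J a b)"

lemma umax_swap_fun: "u_max I J a b = u_max J I b a"
  using umax_swap by blast

lemma Pp_swap: "Pp I J a b \<Longrightarrow> Pp J I b a"
proof -
  assume P: "Pp I J a b"
  have t: "tgt J I b a = tgt I J a b" unfolding tgt_def by (simp add: algebra_simps)
  have q: "Qp I J a b \<Longrightarrow> Qp J I b a" unfolding Qp_def by fastforce
  show ?thesis using P q unfolding Pp_def t
    apply (simp add: sumset_swap[of J I] umax_swap_fun[of J I b a])
    by (metis add.commute)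
qed

lemma base1:
  assumes fJ: "finite J" and nJ: "J \<noteq> {}"
  shows "Pp {x} J a b"
proof -
  have u: "\<And>j. j \<in> J \<Longrightarrow> u_max {x} J a b (x + j) = a x + b j"
  proof -
    fix j assume "j \<in> J"
    then have "{a i + b (x + j - i) | i. i \<in> {x} \<and> x + j - i \<in> J} = {a x + b j}" by auto
    then show "u_max {x} J a b (x + j) = a x + b j" unfolding u_max_def by simp
  qed
  have S: "sumset {x} J = (\<lambda>j. x + j) ` J" unfolding sumset_def by auto
  have "sum (u_max {x} J a b) (sumset {x} J) = (\<Sum>j\<in>J. a x + b j)"
    unfolding S by (subst sum.reindex) (auto simp: inj_on_def u)
  also have "\<dots> = real (card J) * a x + sum b J" by (simp add: sum.distrib)
  also have "\<dots> = tgt {x} J a b" unfolding tgt_def using fJ nJ by (simp add: field_simps)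
  finally have eq: "sum (u_max {x} J a b) (sumset {x} J) = tgt {x} J a b" .
  have Q: "Qp {x} J a b" unfolding Qp_def consec_def by auto
  show ?thesis unfolding Pp_def using eq Q u by auto
qed

lemma base2:
  assumes fI: "finite I" and nI: "I \<noteq> {}"
  shows "Pp I {y} a b"
  using Pp_swap[OF base1[OF fI nI, of y b a]] .



lemma main:
  assumes "finite I" "I \<noteq> {}" "finite J" "J \<noteq> {}" "\<forall>i\<in>I. a i \<ge> 0" "\<forall>j\<in>J. b j \<ge> 0"
  shows "Pp I J a b"
  using assms
proof (induction "card I + card J" arbitrary: I J rule: less_induct)
  case less
  note fI = less.prems(1) and nI = less.prems(2) and fJ = less.prems(3) and nJ = less.prems(4)
    and a0 = less.prems(5) and b0 = less.prems(6)
  have cI1: "card I \<ge> 1" using fI nI by (simp add: Suc_le_eq card_gt_0_iff)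
  have cJ1: "card J \<ge> 1" using fJ nJ by (simp add: Suc_le_eq card_gt_0_iff)
  show ?case
  proof (cases "card I = 1")
    case True
    then obtain x where "I = {x}" by (auto simp: card_1_singleton_iff)
    then show ?thesis using base1[OF fJ nJ] by simp
  next
    case False
    then have cI: "card I \<ge> 2" using cI1 by linarith
    show ?thesis
    proof (cases "card J = 1")
      case True
      then obtain y where "J = {y}" by (auto simp: card_1_singleton_iff)
      then show ?thesis using base2[OF fI nI] by simp
    next
      case False
      then have cJ: "card J \<ge> 2" using cJ1 by linarith
      define x where "x = Min I"
      define y where "y = Min J"
      define I' where "I' = I - {x}"
      define J' where "J' = J - {y}"
      define m where "m = real (card I)"
      define n where "n = real (card J)"
      define A where "A = sum a I"
      define B where "B = sum b J"
      define \<Sigma> where "\<Sigma> = sum (u_max I J a b) (sumset I J)"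
      define \<Sigma>H where "\<Sigma>H = sum (u_max I J' a b) (sumset I J')"
      define \<Sigma>V where "\<Sigma>V = sum (u_max I' J a b) (sumset I' J)"
      have xI: "x \<in> I" using fI nI by (simp add: x_def)
      have yJ: "y \<in> J" using fJ nJ by (simp add: y_def)
      have xle: "\<And>i. i \<in> I \<Longrightarrow> x \<le> i" using fI by (simp add: x_def)
      have yle: "\<And>j. j \<in> J \<Longrightarrow> y \<le> j" using fJ by (simp add: y_def)
      have cI': "card I' = card I - 1" using xI fI by (simp add: I'_def)
      have cJ': "card J' = card J - 1" using yJ fJ by (simp add: J'_def)
      have fI': "finite I'" "I' \<noteq> {}" using fI apply (simp add: I'_def)
        by (intro notI) (use cI cI' in simp)
      have fJ': "finite J'" "J' \<noteq> {}" using fJ apply (simp add: J'_def)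
        by (intro notI) (use cJ cJ' in simp)
      have IHH: "Pp I J' a b"
        by (rule less.hyps) (use fI nI fJ' a0 b0 cJ cJ' in \<open>auto simp: J'_def\<close>)
      have IHV: "Pp I' J a b"
        by (rule less.hyps) (use fJ nJ fI' a0 b0 cI cI' in \<open>auto simp: I'_def\<close>)
      note H1 = stepJ(1)[OF fI nI fJ cJ a0 b0]
      note H2 = stepJ(2)[OF fI nI fJ cJ a0 b0]
      note V1 = stepJ(1)[OF fJ nJ fI cI b0 a0]
      note V2 = stepJ(2)[OF fJ nJ fI cI b0 a0]
      have sw1: "sumset J I = sumset I J" "sumset J (I - {Min I}) = sumset (I - {Min I}) J"
        by (simp_all add: sumset_swap)
      have sw2: "u_max J I b a = u_max I J a b" "u_max J (I - {Min I}) b a = u_max (I - {Min I}) J a b"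
        by (simp_all add: umax_swap_fun)
      have sw3: "\<And>t. u_max J I b a t = u_max I J a b t" "\<And>t. u_max J (I - {Min I}) b a t = u_max (I - {Min I}) J a b t"
        by (simp_all add: umax_swap_fun)
      note V1' = V1[unfolded sw1 sw2]
      note V2' = V2[unfolded sw1 sw2 sw3]
      have hH1: "\<Sigma> \<ge> a x + b y + \<Sigma>H" using H1 by (simp add: \<Sigma>_def \<Sigma>H_def x_def y_def J'_def)
      have hV1: "\<Sigma> \<ge> a x + b y + \<Sigma>V" using V1' by (simp add: \<Sigma>_def \<Sigma>V_def x_def y_def I'_def)
      have PH: "\<Sigma>H \<ge> tgt I J' a b" using IHH by (simp add: Pp_def \<Sigma>H_def)
      have PV: "\<Sigma>V \<ge> tgt I' J a b" using IHV by (simp add: Pp_def \<Sigma>V_def)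
      have tJ': "tgt I J' a b = (m + (n - 1) - 1) * (A / m + (B - b y) / (n - 1))"
        unfolding tgt_def using cJ' cJ fJ yJ by (simp add: m_def n_def A_def B_def J'_def sum_diff1 of_nat_diff)
      have tI': "tgt I' J a b = ((m - 1) + n - 1) * ((A - a x) / (m - 1) + B / n)"
        unfolding tgt_def using cI' cI fI xI by (simp add: m_def n_def A_def B_def I'_def sum_diff1 of_nat_diff)
      have t: "tgt I J a b = (m + n - 1) * (A / m + B / n)" unfolding tgt_def by (simp add: m_def n_def A_def B_def)
      define H where "H = a x + b y + tgt I J' a b - tgt I J a b"
      define V where "V = a x + b y + tgt I' J a b - tgt I J a b"
      have m1: "m > 1" "n > 1" using cI cJ by (simp_all add: m_def n_def)
      have id: "(n - 1) * H + (m - 1) * V = 0"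
        unfolding H_def V_def tJ' tI' t by (rule arith_id[OF m1])
      have HV: "H \<ge> 0 \<or> V \<ge> 0"
      proof (rule ccontr)
        assume "\<not> (H \<ge> 0 \<or> V \<ge> 0)"
        then have "(n - 1) * H < 0" "(m - 1) * V < 0" using m1 by (auto intro: mult_pos_neg)
        with id show False by linarith
      qed
      have ineq: "\<Sigma> \<ge> tgt I J a b" using HV hH1 hV1 PH PV by (auto simp: H_def V_def)
      have eqcase: "(\<forall>i\<in>I. \<forall>j\<in>J. u_max I J a b (i + j) = a i + b j) \<and> Qp I J a b"
        if apos: "\<forall>i\<in>I. a i > 0" and bpos: "\<forall>j\<in>J. b j > 0" and eq: "\<Sigma> = tgt I J a b"
      proof -
        have Hle: "H \<le> 0" "V \<le> 0" using eq hH1 hV1 PH PV by (auto simp: H_def V_def)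
        have H0: "H = 0"
        proof (rule ccontr)
          assume "H \<noteq> 0"
          then have "(n - 1) * H < 0" using Hle m1 by (auto intro: mult_pos_neg)
          moreover have "(m - 1) * V \<le> 0" using Hle m1 by (auto intro: mult_nonneg_nonpos)
          ultimately show False using id by linarith
        qed
        have V0: "V = 0" using id H0 m1 by simp
        have sH: "\<Sigma>H = tgt I J' a b" using eq hH1 PH H0 by (simp add: H_def)
        have sV: "\<Sigma>V = tgt I' J a b" using eq hV1 PV V0 by (simp add: V_def)
        have RH: "sumset I J = insert (x + y) (sumset I J') \<and> x + y \<notin> sumset I J' \<and>
          (\<forall>t\<in>sumset I J'. u_max I J a b t = u_max I J' a b t) \<and> u_max I J a b (x + y) = a x + b y"
          using H2[OF apos bpos] eq sH H0 unfolding H_def by (simp add: \<Sigma>_def \<Sigma>H_def x_def y_def J'_def)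
        have RV: "sumset I J = insert (y + x) (sumset I' J) \<and> y + x \<notin> sumset I' J \<and>
          (\<forall>t\<in>sumset I' J. u_max I J a b t = u_max I' J a b t)"
          using V2'[OF bpos apos] eq sV V0 unfolding V_def by (simp add: \<Sigma>_def \<Sigma>V_def x_def y_def I'_def)
        have EH: "(\<forall>i\<in>I. \<forall>j\<in>J'. u_max I J' a b (i + j) = a i + b j) \<and> Qp I J' a b"
          using IHH apos bpos sH unfolding Pp_def \<Sigma>H_def by (auto simp: J'_def)
        have EV: "(\<forall>i\<in>I'. \<forall>j\<in>J. u_max I' J a b (i + j) = a i + b j) \<and> Qp I' J a b"
          using IHV apos bpos sV unfolding Pp_def \<Sigma>V_def by (auto simp: I'_def)
        have E2: "\<forall>i\<in>I. \<forall>j\<in>J. u_max I J a b (i + j) = a i + b j"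
        proof (intro ballI)
          fix i j assume iI: "i \<in> I" and jJ: "j \<in> J"
          show "u_max I J a b (i + j) = a i + b j"
          proof (cases "j = y")
            case False
            then have "j \<in> J'" using jJ by (simp add: J'_def)
            then have "i + j \<in> sumset I J'" using iI by (auto simp: sumset_def)
            then show ?thesis using RH EH iI \<open>j \<in> J'\<close> by auto
          next
            case True
            show ?thesis
            proof (cases "i = x")
              case True
              then show ?thesis using RH \<open>j = y\<close> by simp
            next
              case False
              then have "i \<in> I'" using iI by (simp add: I'_def)
              then have "i + j \<in> sumset I' J" using jJ by (auto simp: sumset_def)
              then show ?thesis using RV EV jJ \<open>i \<in> I'\<close> by auto
            qed
          qed
        qed
        have SS: "sumset I J' = sumset I' J"
        proof -
          have "sumset I J' = sumset I J - {x + y}" using RH by auto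
          moreover have "sumset I' J = sumset I J - {x + y}" using RV by (auto simp: add.commute)
          ultimately show ?thesis by simp
        qed
        have Q: "Qp I J a b"
          unfolding Qp_def
        proof (intro allI impI)
          fix i i' j j' assume ci: "consec I i i'" and cj: "consec J j j'"
          show "i' - i = j' - j \<and> a i' - a i = b j' - b j"
          proof (cases "j = y")
            case False
            then have "consec J' j j'" using cj yle by (force simp: consec_def J'_def)
            then show ?thesis using EH ci unfolding Qp_def by blast
          next
            case jy: True
            show ?thesis
            proof (cases "i = x")
              case False
              then have "consec I' i i'" using ci xle by (force simp: consec_def I'_def)
              then show ?thesis using EV cj unfolding Qp_def by blast
            next
              case ix: True
              have i'I: "i' \<in> I" "i < i'" "\<And>z. z \<in> I \<Longrightarrow> \<not> (i < z \<and> z < i')" using ci by (auto simp: consec_def)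
              have j'J: "j' \<in> J" "j < j'" "\<And>z. z \<in> J \<Longrightarrow> \<not> (j < z \<and> z < j')" using cj by (auto simp: consec_def)
              have "x + j' \<in> sumset I J'" using xI j'J jy by (auto simp: sumset_def J'_def)
              then have "x + j' \<in> sumset I' J" using SS by simp
              then obtain p q where pq: "p \<in> I'" "q \<in> J" "x + j' = p + q" by (auto simp: sumset_def)
              have "p \<ge> i'"
              proof -
                have "p \<in> I" "p \<noteq> x" using pq by (auto simp: I'_def)
                then have "p > x" using xle[of p] by simp
                then show ?thesis using i'I(3)[of p] \<open>p \<in> I\<close> ix by linarith
              qed
              moreover have "q \<ge> y" using yle pq by simp
              ultimately have g1: "x + j' \<ge> i' + y" using pq by linarith
              have "i' + y \<in> sumset I' J" using i'I ix yJ by (auto simp: sumset_def I'_def)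
              then have "i' + y \<in> sumset I J'" using SS by simp
              then obtain p q where pq: "p \<in> I" "q \<in> J'" "i' + y = p + q" by (auto simp: sumset_def)
              have "q \<ge> j'"
              proof -
                have "q \<in> J" "q \<noteq> y" using pq by (auto simp: J'_def)
                then have "q > y" using yle[of q] by simp
                then show ?thesis using j'J(3)[of q] \<open>q \<in> J\<close> jy by linarith
              qed
              moreover have "p \<ge> x" using xle pq by simp
              ultimately have g2: "i' + y \<ge> x + j'" using pq by linarith
              have same: "x + j' = i' + y" using g1 g2 by simp
              have "u_max I J a b (x + j') = a x + b j'" using E2 xI j'J by simp
              moreover have "u_max I J a b (i' + y) = a i' + b y" using E2 i'I yJ by simp
              ultimately have "a x + b j' = a i' + b y" using same by simp
              then show ?thesis using same ix jy by simp
            qed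
          qed
        qed
        show ?thesis using E2 Q by simp
      qed
      show ?thesis unfolding Pp_def using ineq eqcase by (simp add: \<Sigma>_def)
    qed
  qed
qed



lemma list_consec:
  assumes "sorted_wrt (<) xs" "set xs = I" "Suc k < length xs"
  shows "consec I (xs ! k) (xs ! Suc k)"
  unfolding consec_def
proof (intro conjI ballI)
  show "xs ! k \<in> I" "xs ! Suc k \<in> I" using assms nth_mem[of k xs] nth_mem[of "Suc k" xs] by auto
  show "xs ! k < xs ! Suc k" using sorted_wrt_nth_less[OF assms(1)] assms(3) by simp
  fix z assume "z \<in> I"
  then obtain p where p: "p < length xs" "z = xs ! p" using assms(2) by (auto simp: in_set_conv_nth)
  show "\<not> (xs ! k < z \<and> z < xs ! Suc k)"
  proof
    assume h: "xs ! k < z \<and> z < xs ! Suc k"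
    consider "p \<le> k" | "p \<ge> Suc k" by linarith
    then show False
    proof cases
      case 1
      then have "xs ! p \<le> xs ! k"
        using sorted_wrt_nth_less[OF assms(1), of p k] assms(3) by (cases "p = k") auto
      then show False using h p by simp
    next
      case 2
      then have "xs ! Suc k \<le> xs ! p"
        using sorted_wrt_nth_less[OF assms(1), of "Suc k" p] p by (cases "p = Suc k") auto
      then show False using h p by simp
    qed
  qed
qed

lemma closed_form:
  fixes f :: "nat \<Rightarrow> real"
  assumes "\<forall>k. Suc k < N \<longrightarrow> f (Suc k) - f k = d"
  shows "k < N \<Longrightarrow> f k = f 0 + real k * d"
proof (induction k)
  case 0 then show ?case by simp
next
  case (Suc k)
  then have "f k = f 0 + real k * d" by simp
  moreover have "f (Suc k) - f k = d" using assms Suc.prems by blast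
  ultimately show ?case by (simp add: algebra_simps)
qed

lemma gauss:
  "(\<Sum>k<N. c + real k * e) = real N * c + e * real N * (real N - 1) / 2"
  by (induction N) (simp_all add: field_simps)

lemma fwd:
  assumes fI: "finite I" and fJ: "finite J" and cI: "card I \<ge> 2" and cJ: "card J \<ge> 2"
    and Q: "Qp I J a b"
  shows "\<exists>x0 y0 d \<alpha> \<beta> e :: real. d > 0 \<and>
             I = {x0 + real k * d | k. k < card I} \<and>
             J = {y0 + real k * d | k. k < card J} \<and>
             (\<forall>k < card I. a (x0 + real k * d) = \<alpha> + real k * e) \<and>
             (\<forall>k < card J. b (y0 + real k * d) = \<beta> + real k * e)"
proof -
  obtain xs where xs: "sorted_wrt (<) xs" "set xs = I" "length xs = card I"
    using sorted_list_of_set.finite_set_strict_sorted[of I] fI by auto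
  obtain ys where ys: "sorted_wrt (<) ys" "set ys = J" "length ys = card J"
    using sorted_list_of_set.finite_set_strict_sorted[of J] fJ by auto
  define d where "d = ys ! 1 - ys ! 0"
  define e where "e = b (ys ! 1) - b (ys ! 0)"
  have cy0: "consec J (ys ! 0) (ys ! 1)" using list_consec[OF ys(1,2), of 0] ys(3) cJ by simp
  have cx0: "consec I (xs ! 0) (xs ! 1)" using list_consec[OF xs(1,2), of 0] xs(3) cI by simp
  have dx: "\<forall>k. Suc k < length xs \<longrightarrow> xs ! Suc k - xs ! k = d"
    and ex: "\<forall>k. Suc k < length xs \<longrightarrow> a (xs ! Suc k) - a (xs ! k) = e"
    using Q list_consec[OF xs(1,2)] cy0 unfolding Qp_def d_def e_def by auto
  have x10: "xs ! 1 - xs ! 0 = d" "a (xs ! 1) - a (xs ! 0) = e" using Q cx0 cy0 unfolding Qp_def d_def e_def by auto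
  have dey: "ys ! Suc k - ys ! k = d \<and> b (ys ! Suc k) - b (ys ! k) = e" if "Suc k < length ys" for k
  proof -
    have "consec J (ys ! k) (ys ! Suc k)" using list_consec[OF ys(1,2) that] .
    then have "xs ! 1 - xs ! 0 = ys ! Suc k - ys ! k \<and> a (xs ! 1) - a (xs ! 0) = b (ys ! Suc k) - b (ys ! k)"
      using Q cx0 unfolding Qp_def by blast
    then show ?thesis using x10 by simp
  qed
  have dy: "\<forall>k. Suc k < length ys \<longrightarrow> ys ! Suc k - ys ! k = d"
    and ey: "\<forall>k. Suc k < length ys \<longrightarrow> b (ys ! Suc k) - b (ys ! k) = e" using dey by auto
  have dpos: "d > 0" using cy0 unfolding consec_def d_def by simp
  have xk: "\<And>k. k < length xs \<Longrightarrow> xs ! k = xs ! 0 + real k * d"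
    using closed_form[of "length xs" "\<lambda>k. xs ! k" d] dx by blast
  have axk: "\<And>k. k < length xs \<Longrightarrow> a (xs ! k) = a (xs ! 0) + real k * e"
    using closed_form[of "length xs" "\<lambda>k. a (xs ! k)" e] ex by blast
  have yk: "\<And>k. k < length ys \<Longrightarrow> ys ! k = ys ! 0 + real k * d"
    using closed_form[of "length ys" "\<lambda>k. ys ! k" d] dy by blast
  have byk: "\<And>k. k < length ys \<Longrightarrow> b (ys ! k) = b (ys ! 0) + real k * e"
    using closed_form[of "length ys" "\<lambda>k. b (ys ! k)" e] ey by blast
  have I: "I = {xs ! 0 + real k * d | k. k < card I}"
    unfolding xs(3)[symmetric] unfolding xs(2)[symmetric] set_conv_nth
  proof (rule Collect_cong)
    fix z show "(\<exists>i. z = xs ! i \<and> i < length xs) = (\<exists>k. z = xs ! 0 + real k * d \<and> k < length xs)"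
    proof
      assume "\<exists>i. z = xs ! i \<and> i < length xs"
      then obtain i where "z = xs ! i" "i < length xs" by blast
      then show "\<exists>k. z = xs ! 0 + real k * d \<and> k < length xs" using xk[of i] by blast
    next
      assume "\<exists>k. z = xs ! 0 + real k * d \<and> k < length xs"
      then obtain k where "z = xs ! 0 + real k * d" "k < length xs" by blast
      then show "\<exists>i. z = xs ! i \<and> i < length xs" using xk[of k] by metis
    qed
  qed
  have J: "J = {ys ! 0 + real k * d | k. k < card J}"
    unfolding ys(3)[symmetric] unfolding ys(2)[symmetric] set_conv_nth
  proof (rule Collect_cong)
    fix z show "(\<exists>i. z = ys ! i \<and> i < length ys) = (\<exists>k. z = ys ! 0 + real k * d \<and> k < length ys)"
    proof
      assume "\<exists>i. z = ys ! i \<and> i < length ys"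
      then obtain i where "z = ys ! i" "i < length ys" by blast
      then show "\<exists>k. z = ys ! 0 + real k * d \<and> k < length ys" using yk[of i] by blast
    next
      assume "\<exists>k. z = ys ! 0 + real k * d \<and> k < length ys"
      then obtain k where "z = ys ! 0 + real k * d" "k < length ys" by blast
      then show "\<exists>i. z = ys ! i \<and> i < length ys" using yk[of k] by metis
    qed
  qed
  have A1: "\<forall>k < card I. a (xs ! 0 + real k * d) = a (xs ! 0) + real k * e"
  proof (intro allI impI)
    fix k assume "k < card I" then show "a (xs ! 0 + real k * d) = a (xs ! 0) + real k * e"
      using axk[of k] xk[of k] xs(3) by simp
  qed
  have B1: "\<forall>k < card J. b (ys ! 0 + real k * d) = b (ys ! 0) + real k * e"
  proof (intro allI impI)
    fix k assume "k < card J" then show "b (ys ! 0 + real k * d) = b (ys ! 0) + real k * e"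
      using byk[of k] yk[of k] ys(3) by simp
  qed
  show ?thesis using dpos I J A1 B1 by blast
qed



lemma ap_img: "{x0 + real k * d | k. k < N} = (\<lambda>k. x0 + real k * d) ` {..<N}"
  by auto

lemma ap_inj: "(d::real) > 0 \<Longrightarrow> inj_on (\<lambda>k. x0 + real k * d) X"
  by (auto simp: inj_on_def)

lemma bwd:
  fixes x0 y0 d \<alpha> \<beta> e :: real
  assumes dpos: "d > 0" and I: "I = {x0 + real k * d | k. k < card I}"
    and J: "J = {y0 + real k * d | k. k < card J}"
    and A: "\<forall>k < card I. a (x0 + real k * d) = \<alpha> + real k * e"
    and B: "\<forall>k < card J. b (y0 + real k * d) = \<beta> + real k * e"
    and cI: "card I \<ge> 1" and cJ: "card J \<ge> 1"
  shows "sum (u_max I J a b) (sumset I J) = tgt I J a b"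
proof -
  define m where "m = card I"
  define n where "n = card J"
  have Ii: "I = (\<lambda>k. x0 + real k * d) ` {..<m}" using I unfolding ap_img m_def .
  have Ji: "J = (\<lambda>k. y0 + real k * d) ` {..<n}" using J unfolding ap_img n_def .
  have sa: "sum a I = (\<Sum>k<m. \<alpha> + real k * e)"
    unfolding Ii by (subst sum.reindex[OF ap_inj[OF dpos]]) (use A m_def in simp)
  have sb: "sum b J = (\<Sum>k<n. \<beta> + real k * e)"
    unfolding Ji by (subst sum.reindex[OF ap_inj[OF dpos]]) (use B n_def in simp)
  have Si: "sumset I J = (\<lambda>k. (x0 + y0) + real k * d) ` {..<m + n - 1}"
  proof (intro set_eqI iffI)
    fix t assume "t \<in> sumset I J"
    then obtain i j where ij: "i \<in> I" "j \<in> J" "t = i + j" by (auto simp: sumset_def)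
    obtain p where p: "p < m" "i = x0 + real p * d" using ij(1) Ii by auto
    obtain q where q: "q < n" "j = y0 + real q * d" using ij(2) Ji by auto
    have "t = (x0 + y0) + real (p + q) * d" using ij p q by (simp add: algebra_simps)
    moreover have "p + q < m + n - 1" using p q by linarith
    ultimately show "t \<in> (\<lambda>k. (x0 + y0) + real k * d) ` {..<m + n - 1}" by blast
  next
    fix t assume "t \<in> (\<lambda>k. (x0 + y0) + real k * d) ` {..<m + n - 1}"
    then obtain k where k: "k < m + n - 1" "t = (x0 + y0) + real k * d" by auto
    define p where "p = min k (m - 1)"
    define q where "q = k - p"
    have pq: "p < m" "q < n" "p + q = k" using k cI cJ by (auto simp: p_def q_def m_def n_def)
    have "x0 + real p * d \<in> I" "y0 + real q * d \<in> J" using pq Ii Ji by auto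
    moreover have "t = (x0 + real p * d) + (y0 + real q * d)"
    proof -
      have "real k = real p + real q" using pq(3) by (metis of_nat_add)
      then show ?thesis using k by (simp add: algebra_simps)
    qed
    ultimately show "t \<in> sumset I J" by (auto simp: sumset_def)
  qed
  have u: "u_max I J a b ((x0 + y0) + real k * d) = \<alpha> + \<beta> + real k * e" if k: "k < m + n - 1" for k
  proof -
    let ?t = "(x0 + y0) + real k * d"
    let ?M = "{a i + b (?t - i) | i. i \<in> I \<and> ?t - i \<in> J}"
    have sub: "?M \<subseteq> {\<alpha> + \<beta> + real k * e}"
    proof
      fix z assume "z \<in> ?M"
      then obtain i where i: "i \<in> I" "?t - i \<in> J" "z = a i + b (?t - i)" by auto
      obtain p where p: "p < m" "i = x0 + real p * d" using i(1) Ii by auto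
      obtain q where q: "q < n" "?t - i = y0 + real q * d" using i(2) Ji by auto
      have kd: "real k * d = real p * d + real q * d" using p(2) q(2) by linarith
      have "(real k - real p - real q) * d = 0" using kd by (simp add: algebra_simps)
      then have "real k = real p + real q" using dpos by simp
      then have kpq: "k = p + q" by linarith
      have ai: "a i = \<alpha> + real p * e" using A p unfolding m_def by simp
      have bi0: "b (?t - i) = b (y0 + real q * d)" using q(2) by (rule arg_cong)
      have bi1: "b (y0 + real q * d) = \<beta> + real q * e" using B q(1) unfolding n_def by simp
      have bi: "b (?t - i) = \<beta> + real q * e" using bi0 bi1 by simp
      have "z = \<alpha> + real p * e + (\<beta> + real q * e)" using i(3) ai bi by simp
      then show "z \<in> {\<alpha> + \<beta> + real k * e}" using kpq by (simp add: algebra_simps)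
    qed
    have "?t \<in> (\<lambda>k. (x0 + y0) + real k * d) ` {..<m + n - 1}" using k by blast
    then have "?t \<in> sumset I J" using Si by simp
    then obtain i j where ij: "i \<in> I" "j \<in> J" "?t = i + j" unfolding sumset_def by blast
    have "?t - i = j" using ij(3) by simp
    then have "a i + b (?t - i) \<in> ?M" using ij(1,2) by blast
    then have ne: "?M \<noteq> {}" by (metis empty_iff)
    have "?M = {\<alpha> + \<beta> + real k * e}" using subset_singletonD[OF sub] ne by (metis (lifting))
    then show ?thesis unfolding u_max_def by simp
  qed
  have "sum (u_max I J a b) (sumset I J) = (\<Sum>k<m + n - 1. \<alpha> + \<beta> + real k * e)"
    unfolding Si by (subst sum.reindex[OF ap_inj[OF dpos]]) (use u in simp)
  also have "\<dots> = real (m + n - 1) * (\<alpha> + \<beta>) + e * real (m + n - 1) * (real (m + n - 1) - 1) / 2"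
    by (rule gauss)
  also have "\<dots> = tgt I J a b"
  proof -
    have r: "real (m + n - 1) = real m + real n - 1" using cI cJ by (simp add: m_def n_def of_nat_diff)
    have mp: "real m > 0" "real n > 0" using cI cJ by (simp_all add: m_def n_def)
    show ?thesis unfolding tgt_def sa sb gauss m_def[symmetric] n_def[symmetric] r
      using mp by (simp add: field_simps)
  qed
  finally show ?thesis .
qed



theorem lemma2p4:
  fixes I J :: "real set" and a b :: "real \<Rightarrow> real"
  assumes "finite I" "I \<noteq> {}" "finite J" "J \<noteq> {}"
    and "\<forall>i\<in>I. a i \<ge> 0" and "\<forall>j\<in>J. b j \<ge> 0"
  shows "(1 / (real (card I) + real (card J) - 1)) * (\<Sum>t\<in>sumset I J. u_max I J a b t)
           \<ge> (1 / real (card I)) * (\<Sum>i\<in>I. a i) + (1 / real (card J)) * (\<Sum>j\<in>J. b j)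
     \<and> (min (card I) (card J) \<ge> 2 \<longrightarrow> (\<forall>i\<in>I. a i > 0) \<longrightarrow> (\<forall>j\<in>J. b j > 0) \<longrightarrow>
         ((1 / (real (card I) + real (card J) - 1)) * (\<Sum>t\<in>sumset I J. u_max I J a b t)
            = (1 / real (card I)) * (\<Sum>i\<in>I. a i) + (1 / real (card J)) * (\<Sum>j\<in>J. b j)
          \<longleftrightarrow>
          (\<exists>x0 y0 d \<alpha> \<beta> e :: real. d > 0 \<and>
             I = {x0 + real k * d | k. k < card I} \<and>
             J = {y0 + real k * d | k. k < card J} \<and>
             (\<forall>k < card I. a (x0 + real k * d) = \<alpha> + real k * e) \<and>
             (\<forall>k < card J. b (y0 + real k * d) = \<beta> + real k * e))))"
proof -
  have P: "Pp I J a b" by (rule main[OF assms])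
  define c where "c = real (card I) + real (card J) - 1"
  define X where "X = (1 / real (card I)) * (\<Sum>i\<in>I. a i) + (1 / real (card J)) * (\<Sum>j\<in>J. b j)"
  define \<Sigma> where "\<Sigma> = (\<Sum>t\<in>sumset I J. u_max I J a b t)"
  have cI: "card I \<ge> 1" using assms(1,2) by (simp add: Suc_le_eq card_gt_0_iff)
  have cJ: "card J \<ge> 1" using assms(3,4) by (simp add: Suc_le_eq card_gt_0_iff)
  have cpos: "c > 0" using cI cJ by (simp add: c_def)
  have tg: "tgt I J a b = c * X" unfolding tgt_def c_def X_def by simp
  have ge: "\<Sigma> \<ge> c * X" using P unfolding Pp_def \<Sigma>_def tg by simp
  have iff: "(1 / c) * \<Sigma> = X \<longleftrightarrow> \<Sigma> = c * X"
  proof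
    assume "(1 / c) * \<Sigma> = X" then have "c * ((1 / c) * \<Sigma>) = c * X" by simp
    then show "\<Sigma> = c * X" using cpos by simp
  next
    assume "\<Sigma> = c * X" then show "(1 / c) * \<Sigma> = X" using cpos by simp
  qed
  have part1: "(1 / c) * \<Sigma> \<ge> X"
  proof -
    have "(1 / c) * \<Sigma> \<ge> (1 / c) * (c * X)" using ge cpos by (intro mult_left_mono) auto
    then show ?thesis using cpos by simp
  qed
  have part2: "(\<forall>i\<in>I. a i > 0) \<longrightarrow> (\<forall>j\<in>J. b j > 0) \<longrightarrow>
      ((1 / c) * \<Sigma> = X \<longleftrightarrow>
          (\<exists>x0 y0 d \<alpha> \<beta> e :: real. d > 0 \<and>
             I = {x0 + real k * d | k. k < card I} \<and>
             J = {y0 + real k * d | k. k < card J} \<and>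
             (\<forall>k < card I. a (x0 + real k * d) = \<alpha> + real k * e) \<and>
             (\<forall>k < card J. b (y0 + real k * d) = \<beta> + real k * e)))"
    if mn: "min (card I) (card J) \<ge> 2"
  proof (intro impI iffI)
    assume apos: "\<forall>i\<in>I. a i > 0" and bpos: "\<forall>j\<in>J. b j > 0"
    {
      assume "(1 / c) * \<Sigma> = X"
      then have "\<Sigma> = tgt I J a b" using iff tg by simp
      then have Q: "Qp I J a b" using P apos bpos unfolding Pp_def \<Sigma>_def by simp
      have c2: "card I \<ge> 2" "card J \<ge> 2" using mn by auto
      show "\<exists>x0 y0 d \<alpha> \<beta> e :: real. d > 0 \<and>
             I = {x0 + real k * d | k. k < card I} \<and>
             J = {y0 + real k * d | k. k < card J} \<and>
             (\<forall>k < card I. a (x0 + real k * d) = \<alpha> + real k * e) \<and>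
             (\<forall>k < card J. b (y0 + real k * d) = \<beta> + real k * e)"
        by (rule fwd[OF assms(1,3) c2 Q])
    }
    {
      assume "\<exists>x0 y0 d \<alpha> \<beta> e :: real. d > 0 \<and>
             I = {x0 + real k * d | k. k < card I} \<and>
             J = {y0 + real k * d | k. k < card J} \<and>
             (\<forall>k < card I. a (x0 + real k * d) = \<alpha> + real k * e) \<and>
             (\<forall>k < card J. b (y0 + real k * d) = \<beta> + real k * e)"
      then have "\<Sigma> = tgt I J a b" unfolding \<Sigma>_def
        apply (elim exE conjE)
        apply (rule bwd)
              apply assumption+
        using cI cJ by auto
      then show "(1 / c) * \<Sigma> = X" using iff tg by simp
    }
  qed
  show ?thesis unfolding c_def[symmetric] X_def[symmetric] \<Sigma>_def[symmetric]
    apply (intro conjI impI)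
     apply (rule part1)
    apply (rule part2[rule_format])
    by auto
qed


end
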